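(* Let $m,n,d,e$ be positive integers with $m=2n$ and $e=\gcd(n,d)=\gcd(m,d)$, and let $s\ge u\ge1$ be integers. If $(x_1,x_2,\dots,x_{2u})\in V_{s,u}$, then $x_1,x_2,x_4,x_6,\dots,x_{2u}$ are linearly dependent over $\mathbb{F}_{2^e}$.
   Context: For integers $s\ge0$ and $u\ge1$, $V_{s,u}$ denotes the set of solutions $(x_1,\dots,x_{2u})\in\mathbb{F}_{2^m}^{2u}$ of the system \[\sum_{i=1}^u\big(x_{2i-1}x_{2i}^{2^{(\frac{n}{e}-j)d}}+x_{2i-1}^{2^{(\frac{n}{e}-j)d}}x_{2i}\big)=0,\qquad j=0,1,\dots,s.\] *)

theory Defs
  imports Main
begin

text \<open>The field F_{2^m} is modelled by a finite field type 'a with CARD('a) = 2^m.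
  The subfield F_{2^e} is the set of fixed points of x \<mapsto> x^(2^e).\<close>

definition subfield_pow2 :: "nat \<Rightarrow> 'a::field set" where
  "subfield_pow2 e = {x. x ^ (2 ^ e) = x}"

text \<open>Frobenius power x^(2^k) for an integer exponent k, interpreted in F_{2^m}
  (where x^(2^m) = x), i.e. the exponent k is reduced modulo m.\<close>

definition frob :: "nat \<Rightarrow> int \<Rightarrow> 'a::field \<Rightarrow> 'a" where
  "frob m k x = x ^ (2 ^ nat (k mod int m))"

text \<open>V_{s,u}: tuples (x_1,...,x_{2u}), represented as functions on indices 1..2u
  (values at other indices are irrelevant).\<close>

definition V :: "nat \<Rightarrow> nat \<Rightarrow> nat \<Rightarrow> nat \<Rightarrow> nat \<Rightarrow> nat \<Rightarrow> (nat \<Rightarrow> 'a::field) set" where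
  "V m n d e s u = {x. \<forall>j\<le>s.
     (\<Sum>i=1..u. x (2*i-1) * frob m ((int (n div e) - int j) * int d) (x (2*i))
              + frob m ((int (n div e) - int j) * int d) (x (2*i-1)) * x (2*i)) = 0}"

definition lin_dep_over :: "'a::field set \<Rightarrow> nat set \<Rightarrow> (nat \<Rightarrow> 'a) \<Rightarrow> bool" where
  "lin_dep_over F I x = (\<exists>c. (\<forall>i\<in>I. c i \<in> F) \<and> (\<exists>i\<in>I. c i \<noteq> 0) \<and> (\<Sum>i\<in>I. c i * x i) = 0)"

end

theory Submission imports Defs "HOL-Number_Theory.Residues" "HOL-Computational_Algebra.Primes"
begin

definition fr :: "nat \<Rightarrow> 'a::field \<Rightarrow> 'a" where "fr n x = x ^ (2 ^ n)"

lemma fr_add: assumes "CHAR('a::field) = 2" shows "fr n (x + y :: 'a) = fr n x + fr n y"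
  unfolding fr_def using assms by (intro freshmans_dream') auto

lemma fr_mult: "fr n (x * y :: 'a::field) = fr n x * fr n y"
  unfolding fr_def by (simp add: power_mult_distrib)
lemma fr_0[simp]: "fr n (0::'a::field) = 0" unfolding fr_def by simp
lemma fr_1[simp]: "fr n (1::'a::field) = 1" unfolding fr_def by simp
lemma fr_eq0[simp]: "fr n (x::'a::field) = 0 \<longleftrightarrow> x = 0" unfolding fr_def by simp
lemma fr_divide: "fr n (x / y :: 'a::field) = fr n x / fr n y"
  unfolding fr_def by (simp add: power_divide)
lemma fr_minus: assumes "CHAR('a::field) = 2" shows "fr n (- x :: 'a) = - fr n x"
  using assms by (simp add: uminus_CHAR_2)
lemma fr_diff: assumes "CHAR('a::field) = 2" shows "fr n (x - y :: 'a) = fr n x - fr n y"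
  using assms by (simp add: minus_CHAR_2 fr_add)
lemma fr_comp: "fr a (fr b (x::'a::field)) = fr (a + b) x"
  unfolding fr_def by (simp add: power_mult[symmetric] power_add mult.commute)
lemma fr_sum: assumes "CHAR('a::field) = 2" shows "fr n (\<Sum>i\<in>A. f i :: 'a) = (\<Sum>i\<in>A. fr n (f i))"
  by (induct A rule: infinite_finite_induct) (auto simp: fr_add[OF assms])

lemma fr_fix_mult: assumes "fr d x = (x::'a::field)" shows "fr (d * t) x = x"
proof (induct t)
  case 0 then show ?case by (simp add: fr_def)
next
  case (Suc t)
  have "fr (d * Suc t) x = fr d (fr (d*t) x)" by (simp add: fr_comp add.commute)
  then show ?case using Suc assms by simp
qed

lemma field_fermat:
  fixes x :: "'a :: {field, finite}"
  shows   "x ^ card (UNIV :: 'a set) = x"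
proof (cases "x = 0")
  case False
  have "x * (\<Prod>y\<in>UNIV-{0}. x * y) = x * x ^ (card (UNIV :: 'a set) - 1) * \<Prod>(UNIV-{0})"
    by (simp add: prod.distrib mult_ac)
  also have "x * x ^ (card (UNIV :: 'a set) - 1) = x ^ Suc (card (UNIV :: 'a set) - 1)"
    by (subst power_Suc) auto
  also have "Suc (card (UNIV :: 'a set) - 1) = card (UNIV :: 'a set)"
    using finite_UNIV_card_ge_0[where ?'a = 'a] by simp
  also have "(\<Prod>y\<in>UNIV-{0}. x * y) = (\<Prod>y\<in>UNIV-{0}. y)"
    by (rule prod.reindex_bij_witness[of _ "\<lambda>y. y / x" "\<lambda>y. x * y"]) (use False in auto)
  finally show ?thesis
    by simp
qed (use finite_UNIV_card_ge_0[where ?'a = 'a] in auto)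

lemma char2:
  assumes "card (UNIV :: 'a::{field,finite} set) = 2 ^ m"
  shows "CHAR('a) = 2"
proof -
  have p: "prime CHAR('a)"
    using prime_CHAR_semidom[where ?'a = 'a] finite_imp_CHAR_pos[where ?'a='a] by simp
  have "CHAR('a) dvd 2 ^ m" using CHAR_dvd_CARD[where ?'a='a] assms by simp
  then have "CHAR('a) dvd 2" using p prime_dvd_power by blast
  then show ?thesis using p by (metis primes_dvd_imp_eq two_is_prime_nat)
qed

lemma fr_period:
  assumes "\<And>x::'a::field. fr m x = x" shows "fr (a + m * t) x = fr a (x::'a)"
proof -
  have "fr (a + m*t) x = fr a (fr (m*t) x)" by (simp add: fr_comp)
  also have "fr (m*t) x = x" using fr_fix_mult assms by blast
  finally show ?thesis .
qed

lemma fr_cong_int: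
  assumes "\<And>x::'a::field. fr m x = x" "m > 0" "int m dvd (int a - int b)"
  shows "fr a x = fr b (x::'a)"
proof -
  have "a mod m = b mod m" using assms(3)
    by (metis mod_eq_dvd_iff of_nat_mod of_nat_eq_iff)
  have "fr a x = fr (a mod m + m * (a div m)) x" by simp
  also have "\<dots> = fr (a mod m) x" by (rule fr_period[OF assms(1)])
  also have "\<dots> = fr (b mod m + m * (b div m)) x" using \<open>a mod m = b mod m\<close> fr_period[OF assms(1)] by metis
  also have "\<dots> = fr b x" by simp
  finally show ?thesis .
qed

lemma frob_fr: "frob m z x = fr (nat (z mod int m)) x"
  unfolding frob_def fr_def by simp



definition indepF :: "nat \<Rightarrow> nat set \<Rightarrow> (nat \<Rightarrow> 'a::field) \<Rightarrow> bool" where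
  "indepF d J y = (\<forall>g. (\<forall>q\<in>J. fr d (g q) = g q) \<longrightarrow> (\<Sum>q\<in>J. g q * y q) = 0 \<longrightarrow> (\<forall>q\<in>J. g q = 0))"

lemma delta_sum:
  assumes "finite I" "j \<in> I"
  shows "(\<Sum>q\<in>I. (if q = j then 1 else 0) * (y q::'a::field)) = y j"
proof -
  have "(\<Sum>q\<in>I. (if q = j then 1 else 0) * y q) = (\<Sum>q\<in>I. if q = j then y q else 0)"
    by (rule sum.cong) auto
  also have "\<dots> = y j" using assms by (simp add: sum.delta)
  finally show ?thesis .
qed

lemma moore:
  fixes y c :: "nat \<Rightarrow> 'a::field"
  assumes ch: "CHAR('a) = 2" and "finite J"
  shows "indepF d J y \<Longrightarrow> (\<forall>l<card J. (\<Sum>q\<in>J. c q * fr (d*(M+l)) (y q)) = 0) \<Longrightarrow> \<forall>q\<in>J. c q = 0"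
  using \<open>finite J\<close>
proof (induct J arbitrary: y c M rule: finite_induct)
  case empty then show ?case by simp
next
  case (insert p J)
  note ind = insert.prems(1) and eqs = insert.prems(2)
  have yp: "y p \<noteq> 0"
  proof
    assume "y p = 0"
    have fin: "finite (insert p J)" using insert.hyps by simp
    have s0: "(\<Sum>q\<in>insert p J. (if q = p then 1 else 0) * y q) = 0"
      using delta_sum[OF fin insertI1, of y] \<open>y p = 0\<close> by (rule trans)
    have fx: "\<forall>q\<in>insert p J. fr d (if q = p then 1 else (0::'a)) = (if q = p then 1 else 0)" by simp
    have "(\<forall>q\<in>insert p J. fr d (if q = p then 1 else (0::'a)) = (if q = p then 1 else 0)) \<longrightarrow>
       (\<Sum>q\<in>insert p J. (if q = p then 1 else 0) * y q) = 0 \<longrightarrow> (\<forall>q\<in>insert p J. (if q = p then 1 else (0::'a)) = 0)"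
      using ind unfolding indepF_def by (rule spec)
    then have "\<forall>q\<in>insert p J. (if q = p then 1 else (0::'a)) = 0" using fx s0 by blast
    then show False by (metis insertI1 one_neq_zero)
  qed
  define y' where "y' q = y q / y p" for q
  define w where "w q = fr d (y' q) - y' q" for q
  have y'p: "y' p = 1" using yp by (simp add: y'_def)
  have indw: "indepF d J w"
    unfolding indepF_def
  proof (intro allI impI)
    fix g :: "nat \<Rightarrow> 'a"
    assume gF: "\<forall>q\<in>J. fr d (g q) = g q" and gs: "(\<Sum>q\<in>J. g q * w q) = 0"
    define S where "S = (\<Sum>q\<in>J. g q * y' q)"
    have "fr d S = (\<Sum>q\<in>J. g q * fr d (y' q))"
      unfolding S_def fr_sum[OF ch] fr_mult using gF by simp
    then have "fr d S - S = (\<Sum>q\<in>J. g q * w q)"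
      unfolding S_def w_def by (simp add: sum_subtractf right_diff_distrib)
    then have SF: "fr d S = S" using gs by simp
    define g' where "g' = g(p := - S)"
    have g'F: "\<forall>q\<in>insert p J. fr d (g' q) = g' q"
      using gF SF insert.hyps by (auto simp: g'_def fr_minus[OF ch])
    have "(\<Sum>q\<in>insert p J. g' q * y q) = - S * y p + (\<Sum>q\<in>J. g q * y q)"
    proof -
      have "(\<Sum>q\<in>J. g' q * y q) = (\<Sum>q\<in>J. g q * y q)"
        using insert.hyps(2) by (intro sum.cong) (auto simp: g'_def)
      then show ?thesis using insert.hyps(1,2) by (simp add: g'_def)
    qed
    also have "(\<Sum>q\<in>J. g q * y q) = y p * S"
      unfolding S_def y'_def sum_distrib_left using yp by (intro sum.cong) auto
    finally have "(\<Sum>q\<in>insert p J. g' q * y q) = 0" by simp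
    then have "\<forall>q\<in>insert p J. g' q = 0" using ind[unfolded indepF_def, THEN spec[of _ g']] g'F by blast
    then show "\<forall>q\<in>J. g q = 0" using insert.hyps by (auto simp: g'_def split: if_splits)
  qed
  define E where "E N = (\<Sum>q\<in>insert p J. c q * fr (d*N) (y' q))" for N
  have E1: "E N = c p + (\<Sum>q\<in>J. c q * fr (d*N) (y' q))" for N
    unfolding E_def using insert.hyps y'p by simp
  have E2: "E N = (\<Sum>q\<in>insert p J. c q * fr (d*N) (y q)) / fr (d*N) (y p)" for N
    unfolding E_def y'_def fr_divide sum_divide_distrib by (simp add: mult.assoc)
  have E0: "E (M+l) = 0" if "l < card (insert p J)" for l
    using eqs that E2 by simp
  have "\<forall>l<card J. (\<Sum>q\<in>J. c q * fr (d*(M+l)) (w q)) = 0"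
  proof (intro allI impI)
    fix l assume l: "l < card J"
    have "(\<Sum>q\<in>J. c q * fr (d*(M+l)) (w q))
        = (\<Sum>q\<in>J. c q * fr (d*(M+Suc l)) (y' q)) - (\<Sum>q\<in>J. c q * fr (d*(M+l)) (y' q))"
      unfolding w_def fr_diff[OF ch] fr_comp sum_subtractf[symmetric] right_diff_distrib
      by (simp add: algebra_simps)
    also have "\<dots> = (E (M + Suc l) - c p) - (E (M+l) - c p)" unfolding E1 by simp
    also have "\<dots> = 0" using E0[of l] E0[of "Suc l"] l insert.hyps by simp
    finally show "(\<Sum>q\<in>J. c q * fr (d*(M+l)) (w q)) = 0" .
  qed
  then have cJ: "\<forall>q\<in>J. c q = 0" using insert.hyps(3)[OF indw] by blast
  have pos: "0 < card (insert p J)" using insert.hyps by simp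
  have "(\<Sum>q\<in>insert p J. c q * fr (d*(M+0)) (y q)) = 0" using eqs[rule_format, OF pos] .
  then have "c p * fr (d*M) (y p) = 0" using cJ insert.hyps by simp
  then have "c p = 0" using yp by simp
  then show ?case using cJ by simp
qed

lemma extend:
  fixes y :: "nat \<Rightarrow> 'a::field"
  assumes ch: "CHAR('a) = 2" and "finite R"
  shows "finite I \<Longrightarrow> indepF d I y \<Longrightarrow> \<exists>B. I \<subseteq> B \<and> B \<subseteq> I \<union> R \<and> indepF d B y \<and>
     (\<forall>j\<in>I \<union> R. \<exists>g. (\<forall>q\<in>B. fr d (g q) = g q) \<and> y j = (\<Sum>q\<in>B. g q * y q))"
  using \<open>finite R\<close>
proof (induct R arbitrary: I rule: finite_induct)
  case empty
  show ?case
  proof (intro exI[of _ I] conjI ballI)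
    fix j assume "j \<in> I \<union> {}"
    then show "\<exists>g. (\<forall>q\<in>I. fr d (g q) = g q) \<and> y j = (\<Sum>q\<in>I. g q * y q)"
      using empty by (intro exI[of _ "\<lambda>q. if q = j then 1 else 0"]) (auto simp: delta_sum)
  qed (use empty in auto)
next
  case (insert r R)
  show ?case
  proof (cases "indepF d (insert r I) y")
    case True
    from insert.hyps(3)[OF _ True] insert.prems obtain B where
      "insert r I \<subseteq> B" "B \<subseteq> insert r I \<union> R" "indepF d B y"
      "\<forall>j\<in>insert r I \<union> R. \<exists>g. (\<forall>q\<in>B. fr d (g q) = g q) \<and> y j = (\<Sum>q\<in>B. g q * y q)" by auto
    then show ?thesis by (intro exI[of _ B]) auto
  next
    case False
    from insert.hyps(3)[OF insert.prems] obtain B where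
      B: "I \<subseteq> B" "B \<subseteq> I \<union> R" "indepF d B y"
      "\<forall>j\<in>I \<union> R. \<exists>g. (\<forall>q\<in>B. fr d (g q) = g q) \<and> y j = (\<Sum>q\<in>B. g q * y q)" by auto
    have fB: "finite B" using B(2) insert by (meson finite_Un finite_subset)
    have "\<exists>g. (\<forall>q\<in>B. fr d (g q) = g q) \<and> y r = (\<Sum>q\<in>B. g q * y q)"
    proof (cases "r \<in> I")
      case True then show ?thesis using B by auto
    next
      case rI: False
      from False obtain g where gF: "\<forall>q\<in>insert r I. fr d (g q) = g q"
        and gs: "(\<Sum>q\<in>insert r I. g q * y q) = 0" and gn: "\<exists>q\<in>insert r I. g q \<noteq> 0"
        unfolding indepF_def by blast
      have gs': "g r * y r + (\<Sum>q\<in>I. g q * y q) = 0" using gs rI insert.prems by simp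
      have gr: "g r \<noteq> 0"
      proof
        assume "g r = 0"
        then have "(\<Sum>q\<in>I. g q * y q) = 0" using gs' by simp
        then have "\<forall>q\<in>I. g q = 0" using insert.prems(2)[unfolded indepF_def, THEN spec[of _ g]] gF by blast
        then show False using gn \<open>g r = 0\<close> by auto
      qed
      define h where "h q = (if q \<in> I then - g q / g r else 0)" for q
      have "(\<Sum>q\<in>B. h q * y q) = (\<Sum>q\<in>I. h q * y q)"
        using fB B(1) by (intro sum.mono_neutral_right) (auto simp: h_def)
      also have "\<dots> = - (\<Sum>q\<in>I. g q * y q) / g r"
        unfolding h_def by (simp add: sum_divide_distrib sum_negf)
      also have "\<dots> = y r"
      proof -
        have "- (\<Sum>q\<in>I. g q * y q) = g r * y r" using gs' by (metis add_eq_0_iff2 minus_minus)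
        then show ?thesis using gr by simp
      qed
      finally have "y r = (\<Sum>q\<in>B. h q * y q)" by simp
      moreover have "\<forall>q\<in>B. fr d (h q) = h q"
        using gF by (auto simp: h_def fr_divide fr_minus[OF ch])
      ultimately show ?thesis by blast
    qed
    then show ?thesis using B by (intro exI[of _ B]) auto
  qed
qed

lemma coord_unique:
  fixes y :: "nat \<Rightarrow> 'a::field"
  assumes ch: "CHAR('a) = 2" and "finite B" "indepF d B y" "j \<in> B"
    "\<forall>q\<in>B. fr d (g q) = g q" "y j = (\<Sum>q\<in>B. g q * y q)"
  shows "\<forall>q\<in>B. g q = (if q = j then 1 else 0)"
proof -
  define h where "h q = g q - (if q = j then 1 else 0)" for q
  have "(\<Sum>q\<in>B. h q * y q) = (\<Sum>q\<in>B. g q * y q) - (\<Sum>q\<in>B. (if q = j then 1 else 0) * y q)"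
    unfolding h_def by (simp add: left_diff_distrib sum_subtractf)
  also have "\<dots> = 0" by (simp only: delta_sum[OF assms(2,4)] assms(6)[symmetric] diff_self)
  finally have hs: "(\<Sum>q\<in>B. h q * y q) = 0" .
  have hF: "\<forall>q\<in>B. fr d (h q) = h q"
  proof
    fix q assume "q \<in> B"
    then have "fr d (g q) = g q" using assms(5) by blast
    have f\<delta>: "fr d (if q = j then 1 else (0::'a)) = (if q = j then 1 else 0)" by simp
    show "fr d (h q) = h q" unfolding h_def fr_diff[OF ch] f\<delta> \<open>fr d (g q) = g q\<close> by (rule refl)
  qed
  from hs hF have "\<forall>q\<in>B. h q = 0" using assms(3)[unfolded indepF_def, THEN spec[of _ h]] by blast
  then show ?thesis by (auto simp: h_def)
qed


lemma arith_dvd: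
  fixes m d k e d' z P Q t :: int
  assumes "m = 2*k*e" "d = e*d'" "P + z - Q = 2*d*k*t"
  shows "m dvd (P + (z mod m) - Q)"
proof -
  have "z mod m = z - m * (z div m)" using minus_div_mult_eq_mod[of z m] by (simp add: mult.commute)
  then have "P + (z mod m) - Q = m * (d' * t - z div m)"
    using assms by (simp add: algebra_simps)
  then show ?thesis by simp
qed

theorem theorem5p2:
  fixes x :: "nat \<Rightarrow> 'a::{field,finite}"
    and m n d e s u :: nat
  assumes "card (UNIV :: 'a set) = 2 ^ m"
    and "m > 0" "n > 0" "d > 0" "e > 0"
    and "m = 2 * n"
    and "e = gcd n d" "e = gcd m d"
    and "u \<ge> 1" "s \<ge> u"
    and "x \<in> V m n d e s u"
  shows "lin_dep_over (subfield_pow2 e) ({1} \<union> {2*i | i. 1 \<le> i \<and> i \<le> u}) x"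
proof (rule ccontr)
  assume nd: "\<not> ?thesis"
  have ch: "CHAR('a) = 2" using char2 assms(1) by blast
  have per: "fr m y = y" for y :: 'a
    using field_fermat[of y] assms(1) by (simp add: fr_def)
  define k where "k = n div e"
  define d' where "d' = d div e"
  have en: "e dvd n" and ed: "e dvd d" using assms(7) by auto
  have nk: "n = k * e" using en by (simp add: k_def)
  have dd: "d = e * d'" using ed by (simp add: d'_def)
  have k1: "k \<ge> 1" using nk assms(3) by (cases k) auto
  have fixeq: "fr d y = y \<longleftrightarrow> fr e y = y" for y :: 'a
  proof
    assume "fr e y = y" then show "fr d y = y" using fr_fix_mult dd by metis
  next
    assume h: "fr d y = y"
    obtain X Y where XY: "d * X = m * Y + gcd d m" using bezout_nat[of d m] assms(4) by auto
    have "gcd d m = e" using assms(8) by (simp add: gcd.commute)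
    then have "fr e y = fr (e + m * Y) y" using fr_period[OF per] by metis
    also have "e + m * Y = d * X" using XY \<open>gcd d m = e\<close> by simp
    also have "fr (d * X) y = y" using fr_fix_mult h by metis
    finally show "fr e y = y" .
  qed
  define I0 where "I0 = {1} \<union> {2*i | i. 1 \<le> i \<and> i \<le> u}"
  have I0R: "I0 \<subseteq> {1..2*u}" using assms(9) by (auto simp: I0_def)
  have fI0: "finite I0" using I0R finite_subset by blast
  have indI0: "indepF d I0 x"
    unfolding indepF_def
  proof (intro allI impI ballI)
    fix g q assume gF: "\<forall>q\<in>I0. fr d (g q) = g q" and gs: "(\<Sum>q\<in>I0. g q * x q) = 0" and q: "q \<in> I0"
    show "g q = 0"
    proof (rule ccontr)
      assume "g q \<noteq> 0"
      have "lin_dep_over (subfield_pow2 e) I0 x"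
        unfolding lin_dep_over_def
        using gF gs q \<open>g q \<noteq> 0\<close> fixeq by (intro exI[of _ g]) (auto simp: subfield_pow2_def fr_def)
      then show False using nd by (simp add: I0_def)
    qed
  qed
  obtain B where B: "I0 \<subseteq> B" "B \<subseteq> I0 \<union> {1..2*u}" "indepF d B x"
    "\<forall>j\<in>I0 \<union> {1..2*u}. \<exists>g. (\<forall>q\<in>B. fr d (g q) = g q) \<and> x j = (\<Sum>q\<in>B. g q * x q)"
    using extend[OF ch _ fI0 indI0, of "{1..2*u}"] by auto
  have BR: "B \<subseteq> {1..2*u}" using B(2) I0R by auto
  have fB: "finite B" using BR finite_subset by blast
  have cardB: "card B \<le> 2*u" using card_mono[OF _ BR] by simp
  have "\<forall>j\<in>{1..2*u}. \<exists>g. (\<forall>q\<in>B. fr d (g q) = g q) \<and> x j = (\<Sum>q\<in>B. g q * x q)"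
    using B(4) by auto
  then obtain G where G0: "\<forall>j\<in>{1..2*u}. (\<forall>q\<in>B. fr d (G j q) = G j q) \<and> x j = (\<Sum>q\<in>B. G j q * x q)"
    using bchoice[OF \<open>\<forall>j\<in>{1..2*u}. _\<close>] by blast
  have G: "\<And>j. j \<in> {1..2*u} \<Longrightarrow> (\<forall>q\<in>B. fr d (G j q) = G j q) \<and> x j = (\<Sum>q\<in>B. G j q * x q)"
    using G0 by blast
  have Gdelta: "G j q = (if q = j then 1 else 0)" if "j \<in> B" "q \<in> B" for j q
  proof -
    have j: "j \<in> {1..2*u}" using BR that(1) by blast
    have "\<forall>q\<in>B. G j q = (if q = j then 1 else 0)"
      using coord_unique[OF ch fB B(3) that(1), of "G j"] G[OF j] by blast
    then show ?thesis using that(2) by blast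
  qed
  have GF: "fr (d*t) (G j q) = G j q" if "j \<in> {1..2*u}" "q \<in> B" for j q t
    using G[OF that(1)] that(2) fr_fix_mult by metis
  have expand: "fr (d*t) (x j) = (\<Sum>q\<in>B. G j q * fr (d*t) (x q))" if "j \<in> {1..2*u}" for j t
  proof -
    have "fr (d*t) (x j) = fr (d*t) (\<Sum>q\<in>B. G j q * x q)"
      using G[OF that] by simp
    also have "\<dots> = (\<Sum>q\<in>B. fr (d*t) (G j q) * fr (d*t) (x q))"
      by (simp add: fr_sum[OF ch] fr_mult)
    also have "\<dots> = (\<Sum>q\<in>B. G j q * fr (d*t) (x q))"
      using GF[OF that] by simp
    finally show ?thesis .
  qed
  define W where "W = 2*k*u - u"
  have u2: "u \<le> 2*k*u" using mult_le_mono1[of 1 "2*k" u] k1 by simp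
  define \<rho> where "\<rho> = (fr (d*k) :: 'a \<Rightarrow> 'a)"
  have hV: "\<And>j. j \<le> s \<Longrightarrow> (\<Sum>i=1..u. x (2*i-1) * frob m ((int k - int j) * int d) (x (2*i))
              + frob m ((int k - int j) * int d) (x (2*i-1)) * x (2*i)) = 0"
    using assms(11) unfolding V_def k_def by auto
  have mI: "int m = 2 * int k * int e" using assms(6) nk by simp
  have dI: "int d = int e * int d'" using dd by simp
  have eqs: "(\<Sum>i=1..u. \<rho> (x (2*i-1)) * fr (d*(W+l)) (x (2*i)) + fr (d*(W+l)) (x (2*i-1)) * \<rho> (x (2*i))) = 0"
    if l: "l \<le> 2*u" for l
  proof (cases "l \<le> u")
    case True
    define j where "j = u - l"
    define z where "z = (int k - int j) * int d"
    define t where "t = nat (z mod int m)"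
    have tI: "int t = z mod int m" using assms(2) by (simp add: t_def)
    have cong: "fr (d*k + t) y = fr (d*(W+l)) y" for y :: 'a
    proof (rule fr_cong_int[OF per assms(2)])
      have "W + l + j = 2*k*u" using u2 True unfolding W_def j_def by arith
      then have "int (W + l) + int j = int (2*k*u)" by (metis of_nat_add)
      then have WI: "int (W + l) = 2 * int k * int u - int j" by simp
      have "int (d * k + t) - int (d * (W + l)) = int d * int k + z mod int m - int d * (2 * int k * int u - int j)"
        unfolding of_nat_add[of "d*k" t] of_nat_mult[of d "W+l"] WI tI by simp
      moreover have "int m dvd int d * int k + z mod int m - int d * (2 * int k * int u - int j)"
        by (rule arith_dvd[OF mI dI, of _ _ _ "1 - int u"]) (simp add: z_def algebra_simps)
      ultimately show "int m dvd int (d * k + t) - int (d * (W + l))" by (simp only:)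
    qed
    have "0 = \<rho> (\<Sum>i=1..u. x (2*i-1) * frob m z (x (2*i)) + frob m z (x (2*i-1)) * x (2*i))"
      using hV[of j] assms(10) True unfolding z_def j_def \<rho>_def by simp
    also have "\<dots> = (\<Sum>i=1..u. \<rho> (x (2*i-1)) * fr (d*k + t) (x (2*i)) + fr (d*k + t) (x (2*i-1)) * \<rho> (x (2*i)))"
      unfolding \<rho>_def fr_sum[OF ch] fr_add[OF ch] fr_mult frob_fr t_def fr_comp by simp
    finally show ?thesis unfolding cong by simp
  next
    case False
    define j where "j = l - u"
    define z where "z = (int k - int j) * int d"
    define t where "t = nat (z mod int m)"
    define A where "A = d*(W+l)"
    have tI: "int t = z mod int m" using assms(2) by (simp add: t_def)
    have cong: "fr (A + t) y = fr (d*k) y" for y :: 'a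
    proof (rule fr_cong_int[OF per assms(2)])
      have "W + l = 2*k*u + j" using u2 False unfolding W_def j_def by arith
      then have WI: "int (W + l) = 2 * int k * int u + int j" by (metis of_nat_add of_nat_mult of_nat_numeral)
      have "int (A + t) - int (d * k) = int d * (2 * int k * int u + int j) + z mod int m - int d * int k"
        unfolding A_def of_nat_add[of "d*(W+l)" t] of_nat_mult[of d "W+l"] WI tI by simp
      moreover have "int m dvd int d * (2 * int k * int u + int j) + z mod int m - int d * int k"
        by (rule arith_dvd[OF mI dI, of _ _ _ "int u"]) (simp add: z_def algebra_simps)
      ultimately show "int m dvd int (A + t) - int (d * k)" by (simp only:)
    qed
    have "0 = fr A (\<Sum>i=1..u. x (2*i-1) * frob m z (x (2*i)) + frob m z (x (2*i-1)) * x (2*i))"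
      using hV[of j] assms(10) False l unfolding z_def j_def by simp
    also have "\<dots> = (\<Sum>i=1..u. fr A (x (2*i-1)) * fr (A + t) (x (2*i)) + fr (A + t) (x (2*i-1)) * fr A (x (2*i)))"
      unfolding fr_sum[OF ch] fr_add[OF ch] fr_mult frob_fr t_def fr_comp by simp
    finally have h: "(\<Sum>i=1..u. fr A (x (2*i-1)) * fr (A + t) (x (2*i)) + fr (A + t) (x (2*i-1)) * fr A (x (2*i))) = 0"
      by simp
    have "(\<Sum>i=1..u. fr A (x (2*i-1)) * \<rho> (x (2*i)) + \<rho> (x (2*i-1)) * fr A (x (2*i))) = 0"
      using h unfolding cong \<rho>_def .
    then show ?thesis unfolding A_def by (simp add: add.commute)
  qed
  define C where "C q = (\<Sum>i=1..u. \<rho> (x (2*i-1)) * G (2*i) q + G (2*i-1) q * \<rho> (x (2*i)))" for q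
  have eqC: "(\<Sum>q\<in>B. C q * fr (d*(W+l)) (x q)) = 0" if "l \<le> 2*u" for l
  proof -
    let ?N = "d*(W+l)"
    have "(\<Sum>q\<in>B. C q * fr ?N (x q))
        = (\<Sum>q\<in>B. \<Sum>i=1..u. \<rho> (x (2*i-1)) * (G (2*i) q * fr ?N (x q)) + (G (2*i-1) q * fr ?N (x q)) * \<rho> (x (2*i)))"
      unfolding C_def sum_distrib_right by (intro sum.cong) (auto simp: algebra_simps)
    also have "\<dots> = (\<Sum>i=1..u. \<Sum>q\<in>B. \<rho> (x (2*i-1)) * (G (2*i) q * fr ?N (x q)) + (G (2*i-1) q * fr ?N (x q)) * \<rho> (x (2*i)))"
      by (rule sum.swap)
    also have "\<dots> = (\<Sum>i=1..u. \<rho> (x (2*i-1)) * fr ?N (x (2*i)) + fr ?N (x (2*i-1)) * \<rho> (x (2*i)))"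
    proof (intro sum.cong refl)
      fix i assume i: "i \<in> {1..u}"
      have j1: "2*i \<in> {1..2*u}" "2*i-1 \<in> {1..2*u}" using i by auto
      show "(\<Sum>q\<in>B. \<rho> (x (2*i-1)) * (G (2*i) q * fr ?N (x q)) + (G (2*i-1) q * fr ?N (x q)) * \<rho> (x (2*i)))
          = \<rho> (x (2*i-1)) * fr ?N (x (2*i)) + fr ?N (x (2*i-1)) * \<rho> (x (2*i))"
        unfolding expand[OF j1(1)] expand[OF j1(2)] sum.distrib sum_distrib_left sum_distrib_right by simp
    qed
    also have "\<dots> = 0" using eqs[OF that] .
    finally show ?thesis .
  qed
  have "\<forall>q\<in>B. C q = 0"
    using moore[OF ch fB B(3), of C W] eqC cardB by auto
  moreover have "1 \<in> B" using B(1) by (auto simp: I0_def)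
  ultimately have C1: "C 1 = 0" by blast
  have G2i: "G (2*i) 1 = 0" if "i \<in> {1..u}" for i
  proof -
    have "2*i \<in> B" using B(1) that by (auto simp: I0_def)
    then show ?thesis using Gdelta[OF _ \<open>1 \<in> B\<close>] by simp
  qed
  have "C 1 = (\<Sum>i=1..u. G (2*i-1) 1 * \<rho> (x (2*i)))"
    unfolding C_def using G2i by (intro sum.cong) auto
  also have "\<dots> = \<rho> (\<Sum>i=1..u. G (2*i-1) 1 * x (2*i))"
    unfolding \<rho>_def fr_sum[OF ch] fr_mult
  proof (intro sum.cong refl)
    fix i assume "i \<in> {1..u}"
    then have "2*i-1 \<in> {1..2*u}" by auto
    then show "G (2*i-1) 1 * fr (d*k) (x (2*i)) = fr (d*k) (G (2*i-1) 1) * fr (d*k) (x (2*i))"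
      using GF[of "2*i-1" 1 k] \<open>1 \<in> B\<close> by simp
  qed
  finally have S0: "(\<Sum>i=1..u. G (2*i-1) 1 * x (2*i)) = 0" using C1 unfolding \<rho>_def by simp
  define c where "c j = (if j = 1 then 0 else G (j-1) 1)" for j
  have I0eq: "I0 = insert 1 ((\<lambda>i. 2*i) ` {1..u})" by (auto simp: I0_def)
  have "lin_dep_over (subfield_pow2 e) I0 x"
    unfolding lin_dep_over_def
  proof (intro exI[of _ c] conjI)
    show "\<forall>i\<in>I0. c i \<in> subfield_pow2 e"
    proof
      fix i assume "i \<in> I0"
      then have "i = 1 \<or> (i - 1 \<in> {1..2*u})" by (auto simp: I0_def)
      then have "fr d (c i) = c i" using GF[of "i-1" 1 1] \<open>1 \<in> B\<close> by (auto simp: c_def)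
      then show "c i \<in> subfield_pow2 e" using fixeq by (simp add: subfield_pow2_def fr_def)
    qed
    have "2 \<in> I0" using assms(9) by (auto simp: I0_def)
    moreover have "c 2 = 1" using Gdelta[OF \<open>1 \<in> B\<close> \<open>1 \<in> B\<close>] by (simp add: c_def)
    ultimately show "\<exists>i\<in>I0. c i \<noteq> 0" by force
    have "(\<Sum>i\<in>I0. c i * x i) = (\<Sum>i\<in>(\<lambda>i. 2*i) ` {1..u}. c i * x i)"
      unfolding I0eq by (subst sum.insert) (auto simp: c_def)
    also have "\<dots> = (\<Sum>i=1..u. c (2*i) * x (2*i))"
      by (subst sum.reindex) (auto simp: inj_on_def)
    also have "\<dots> = (\<Sum>i=1..u. G (2*i-1) 1 * x (2*i))"
      by (intro sum.cong) (auto simp: c_def)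
    finally show "(\<Sum>i\<in>I0. c i * x i) = 0" using S0 by simp
  qed
  then show False using nd by (simp add: I0_def)
qed

end
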